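(* Suppose the designer's preferences satisfy $A_1=A_0=\bar A\ge 0$ and $B_1=B_0=\bar B\ge 0$. Then the designer's optimal classifier (maximizer of $EU_D(\delta\mid r)$ over $\delta\in[0,1]^2$) is $\delta^*=(1,1)$ if $r(\bar A-\bar B)>0$ and $\delta^*=(0,0)$ if $r(\bar A-\bar B)<0$; and if $r=0$ or $\bar A=\bar B$, all classifiers give the designer the same expected payoff.
   Context: A unit mass of individuals $i\in[0,1]$ each privately knows a cost $\gamma_i\in\mathbb{R}$ of choosing behavior $\beta_i=1$ (compliance) rather than $\beta_i=0$. Costs are distributed according to a continuously differentiable CDF $F$ whose density $f$ is log-concave with full support on $\mathbb{R}$. A classifier is $\delta=(\delta_1,\delta_0)\in[0,1]^2$. Each individual's behavior generates a signal $s_i\in\{0,1\}$ with $\Pr[s_i=\beta_i]=\phi$, $\phi\in(\tfrac12,1]$ fixed, and the classifier assigns $d_i\in\{0,1\}$ with $\Pr[d_i=s_i\mid s_i]=\delta_{s_i}$. An individual with $d_i=1$ receives reward $r\in\mathbb{R}$. Let $\rho(\delta,\phi)=(\delta_1+\delta_0-1)(2\phi-1)$; individual $i$ chooses $\beta_i=1$ iff $\gamma_i\le r\rho(\delta,\phi)$, giving prevalence $\pi=F(r\rho(\delta,\phi))$. The designer's payoffs are $A_1$ (complier, $d_i=1$), $A_0$ (complier, $d_i=0$), $B_1$ (non-complier, $d_i=0$), $B_0$ (non-complier, $d_i=1$), with expected payoff $EU_D(\delta\mid r)=\pi\big[\phi(A_1\delta_1+A_0(1-\delta_1))+(1-\phi)(A_0\delta_0+A_1(1-\delta_0))\big]+(1-\pi)\big[\phi(B_1\delta_0+B_0(1-\delta_0))+(1-\phi)(B_0\delta_1+B_1(1-\delta_1))\big]$.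 *)

theory Defs
  imports "HOL-Analysis.Analysis"
begin

definition cost_cdf :: "(real \<Rightarrow> real) \<Rightarrow> (real \<Rightarrow> real) \<Rightarrow> bool" where
  "cost_cdf F f \<longleftrightarrow>
     mono F \<and> (F \<longlongrightarrow> 0) at_bot \<and> (F \<longlongrightarrow> 1) at_top \<and>
     (\<forall>x. (F has_real_derivative f x) (at x)) \<and> continuous_on UNIV f \<and>
     (\<forall>x. f x > 0) \<and> concave_on UNIV (\<lambda>x. ln (f x))"

definition rho :: "real \<Rightarrow> real \<Rightarrow> real \<Rightarrow> real" where
  "rho d1 d0 \<phi> = (d1 + d0 - 1) * (2 * \<phi> - 1)"

definition prevalence :: "(real \<Rightarrow> real) \<Rightarrow> real \<Rightarrow> real \<Rightarrow> real \<Rightarrow> real \<Rightarrow> real" where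
  "prevalence F r \<phi> d1 d0 = F (r * rho d1 d0 \<phi>)"

definition EU_D :: "real \<Rightarrow> real \<Rightarrow> real \<Rightarrow> real \<Rightarrow> (real \<Rightarrow> real) \<Rightarrow> real \<Rightarrow> real
                    \<Rightarrow> real \<Rightarrow> real \<Rightarrow> real" where
  "EU_D A1 A0 B1 B0 F \<phi> r d1 d0 =
     (let \<pi> = prevalence F r \<phi> d1 d0 in
      \<pi> * (\<phi> * (A1 * d1 + A0 * (1 - d1)) + (1 - \<phi>) * (A0 * d0 + A1 * (1 - d0)))
      + (1 - \<pi>) * (\<phi> * (B1 * d0 + B0 * (1 - d0)) + (1 - \<phi>) * (B0 * d1 + B1 * (1 - d1))))"

definition optimal_classifier :: "(real \<Rightarrow> real \<Rightarrow> real) \<Rightarrow> real \<Rightarrow> real \<Rightarrow> bool" where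
  "optimal_classifier EU d1 d0 \<longleftrightarrow> d1 \<in> {0..1} \<and> d0 \<in> {0..1} \<and>
     (\<forall>e1\<in>{0..1}. \<forall>e0\<in>{0..1}. EU e1 e0 \<le> EU d1 d0)"

end

theory Submission
  imports Defs
begin

lemma EU_simp: "EU_D A A B B F \<phi> r d1 d0 = B + F (r * ((d1 + d0 - 1) * (2*\<phi> - 1))) * (A - B)"
  unfolding EU_D_def prevalence_def rho_def Let_def by (simp add: algebra_simps)

lemma F_strict: assumes "cost_cdf F f" "x < y" shows "F x < F y"
proof -
  have "\<forall>z. (F has_real_derivative f z) (at z)" "\<forall>z. f z > 0" using assms(1) unfolding cost_cdf_def by auto
  then show ?thesis using DERIV_pos_imp_increasing[OF assms(2)] by blast
qed

lemma g_strict: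
  assumes F: "cost_cdf F f" and c: "c > 0" and rp: "r * (A - B) > 0" and st: "s < t"
  shows "F (r * (s * c)) * (A - B) < F (r * (t * c)) * (A - B)"
proof (cases "r > 0")
  case True
  then have "A - B > 0" using rp by (simp add: zero_less_mult_iff)
  moreover have "r * (s*c) < r * (t*c)" using True c st by simp
  ultimately show ?thesis using F_strict[OF F] by simp
next
  case False
  then have r: "r < 0" "A - B < 0" using rp by (auto simp: zero_less_mult_iff)
  moreover have "r * (t*c) < r * (s*c)" using r c st by simp
  ultimately show ?thesis using F_strict[OF F] by (simp add: mult_less_cancel_right)
qed

theorem proposition2:
  fixes F f :: "real \<Rightarrow> real" and \<phi> r Abar Bbar :: real
  assumes F: "cost_cdf F f"
    and phi: "1/2 < \<phi>" "\<phi> \<le> 1"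
    and A: "Abar \<ge> 0" and B: "Bbar \<ge> 0"
  shows "(r * (Abar - Bbar) > 0 \<longrightarrow>
            (\<forall>d1 d0. optimal_classifier (EU_D Abar Abar Bbar Bbar F \<phi> r) d1 d0
                        \<longleftrightarrow> (d1 = 1 \<and> d0 = 1)))
       \<and> (r * (Abar - Bbar) < 0 \<longrightarrow>
            (\<forall>d1 d0. optimal_classifier (EU_D Abar Abar Bbar Bbar F \<phi> r) d1 d0
                        \<longleftrightarrow> (d1 = 0 \<and> d0 = 0)))
       \<and> (r = 0 \<or> Abar = Bbar \<longrightarrow>
            (\<forall>d1\<in>{0..1}. \<forall>d0\<in>{0..1}. \<forall>e1\<in>{0..1}. \<forall>e0\<in>{0..1}.
               EU_D Abar Abar Bbar Bbar F \<phi> r d1 d0 = EU_D Abar Abar Bbar Bbar F \<phi> r e1 e0))"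
proof (intro conjI impI allI)
  define c where "c = 2*\<phi> - 1"
  have c: "c > 0" using phi c_def by simp
  have EU: "EU_D Abar Abar Bbar Bbar F \<phi> r d1 d0 = Bbar + F (r * ((d1 + d0 - 1) * c)) * (Abar - Bbar)" for d1 d0
    using EU_simp c_def by simp
  {
    fix d1 d0 :: real
    assume rp: "r * (Abar - Bbar) > 0"
    have mono: "s < t \<Longrightarrow> F (r * (s * c)) * (Abar - Bbar) < F (r * (t * c)) * (Abar - Bbar)" for s t
      using g_strict[OF F c rp] by blast
    have monole: "s \<le> t \<Longrightarrow> F (r * (s * c)) * (Abar - Bbar) \<le> F (r * (t * c)) * (Abar - Bbar)" for s t
      using mono[of s t] by (cases "s = t") auto
    show "optimal_classifier (EU_D Abar Abar Bbar Bbar F \<phi> r) d1 d0 \<longleftrightarrow> (d1 = 1 \<and> d0 = 1)"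
    proof
      assume o: "optimal_classifier (EU_D Abar Abar Bbar Bbar F \<phi> r) d1 d0"
      then have d: "d1 \<in> {0..1}" "d0 \<in> {0..1}" and le: "EU_D Abar Abar Bbar Bbar F \<phi> r 1 1 \<le> EU_D Abar Abar Bbar Bbar F \<phi> r d1 d0"
        unfolding optimal_classifier_def by auto
      show "d1 = 1 \<and> d0 = 1"
      proof (rule ccontr)
        assume "\<not> (d1 = 1 \<and> d0 = 1)"
        then have "d1 + d0 - 1 < 1 + 1 - 1" using d by auto
        from mono[OF this] le show False unfolding EU by simp
      qed
    next
      assume "d1 = 1 \<and> d0 = 1"
      then show "optimal_classifier (EU_D Abar Abar Bbar Bbar F \<phi> r) d1 d0"
        unfolding optimal_classifier_def EU using monole[of _ 1] by fastforce
    qed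
  }
  {
    fix d1 d0 :: real
    assume rn: "r * (Abar - Bbar) < 0"
    have rp: "r * (Bbar - Abar) > 0" using rn by (simp add: algebra_simps)
    have EU': "EU_D Abar Abar Bbar Bbar F \<phi> r d1 d0 = Bbar - F (r * ((d1 + d0 - 1) * c)) * (Bbar - Abar)" for d1 d0
      unfolding EU by (simp add: algebra_simps)
    have mono: "s < t \<Longrightarrow> F (r * (s * c)) * (Bbar - Abar) < F (r * (t * c)) * (Bbar - Abar)" for s t
      using g_strict[OF F c rp] by blast
    have monole: "s \<le> t \<Longrightarrow> F (r * (s * c)) * (Bbar - Abar) \<le> F (r * (t * c)) * (Bbar - Abar)" for s t
      using mono[of s t] by (cases "s = t") auto
    show "optimal_classifier (EU_D Abar Abar Bbar Bbar F \<phi> r) d1 d0 \<longleftrightarrow> (d1 = 0 \<and> d0 = 0)"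
    proof
      assume o: "optimal_classifier (EU_D Abar Abar Bbar Bbar F \<phi> r) d1 d0"
      then have d: "d1 \<in> {0..1}" "d0 \<in> {0..1}" and le: "EU_D Abar Abar Bbar Bbar F \<phi> r 0 0 \<le> EU_D Abar Abar Bbar Bbar F \<phi> r d1 d0"
        unfolding optimal_classifier_def by auto
      show "d1 = 0 \<and> d0 = 0"
      proof (rule ccontr)
        assume "\<not> (d1 = 0 \<and> d0 = 0)"
        then have "0 + 0 - 1 < d1 + d0 - 1" using d by auto
        from mono[OF this] le show False unfolding EU' by simp
      qed
    next
      assume "d1 = 0 \<and> d0 = 0"
      then show "optimal_classifier (EU_D Abar Abar Bbar Bbar F \<phi> r) d1 d0"
        unfolding optimal_classifier_def EU' using monole[of "-1"] by fastforce
    qed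
  }
  assume "r = 0 \<or> Abar = Bbar"
  then show "\<forall>d1\<in>{0..1}. \<forall>d0\<in>{0..1}. \<forall>e1\<in>{0..1}. \<forall>e0\<in>{0..1}.
               EU_D Abar Abar Bbar Bbar F \<phi> r d1 d0 = EU_D Abar Abar Bbar Bbar F \<phi> r e1 e0"
    unfolding EU by auto
qed

end
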